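(* Let $p$ be an odd prime and $\chi$ a primitive Dirichlet character with odd conductor $f$. For every integer $n\ge0$, in $\mathbb Q_p(\chi)$, $$E_{n,\chi}=\lim_{N\to\infty}\sum_{a=1}^{fp^N}(-1)^a\chi(a)a^n .$$
   Context: We set $\chi(a)=0$ if $a$ is not prime to $f$. The generalized Euler numbers are defined by $2\sum_{a=1}^{f}\frac{(-1)^a\chi(a)e^{at}}{e^{ft}+1}=\sum_{n\ge0}E_{n,\chi}\frac{t^n}{n!}$; they lie in $\mathbb Q(\chi)$, viewed inside $\mathbb Q_p(\chi)$, the field generated over $\mathbb Q_p$ by the values of $\chi$. The limit is in the $p$-adic topology. *)

theory Defs
  imports Complex_Main "HOL-Computational_Algebra.Computational_Algebra"
begin

definition dirichlet_char :: "nat \<Rightarrow> (nat \<Rightarrow> complex) \<Rightarrow> bool" where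
  "dirichlet_char f \<chi> \<longleftrightarrow> f > 0 \<and>
     (\<forall>a. \<chi> (a + f) = \<chi> a) \<and>
     (\<forall>a b. \<chi> (a * b) = \<chi> a * \<chi> b) \<and>
     \<chi> 1 = 1 \<and>
     (\<forall>a. \<chi> a = 0 \<longleftrightarrow> \<not> coprime a f)"

text \<open>Primitive: not induced from any proper divisor d of f, i.e. for each proper
  divisor d there is a unit a mod f with a = 1 mod d and chi(a) different from 1.\<close>
definition primitive_dirichlet_char :: "nat \<Rightarrow> (nat \<Rightarrow> complex) \<Rightarrow> bool" where
  "primitive_dirichlet_char f \<chi> \<longleftrightarrow> dirichlet_char f \<chi> \<and>
     (\<forall>d. d dvd f \<and> d < f \<longrightarrow>
        (\<exists>a. coprime a f \<and> a mod d = 1 mod d \<and> \<chi> a \<noteq> 1))"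

definition gen_euler :: "nat \<Rightarrow> (nat \<Rightarrow> complex) \<Rightarrow> nat \<Rightarrow> complex" where
  "gen_euler f \<chi> n = fact n * fps_nth
     (2 * (\<Sum>a=1..f. fps_const ((-1) ^ a * \<chi> a) * fps_exp (of_nat a))
        / (fps_exp (of_nat f) + 1)) n"

text \<open>x is p-integral: root of a monic polynomial whose coefficients are rationals
  with denominator prime to p (i.e. nonnegative valuation at every prime above p).\<close>
definition p_integral :: "nat \<Rightarrow> complex \<Rightarrow> bool" where
  "p_integral p x \<longleftrightarrow> (\<exists>P :: complex poly. lead_coeff P = 1 \<and> poly P x = 0 \<and>
     (\<forall>i. \<exists>r :: rat. coeff P i = of_rat r \<and> coprime (snd (quotient_of r)) (int p)))"

definition padic_tendsto :: "nat \<Rightarrow> (nat \<Rightarrow> complex) \<Rightarrow> complex \<Rightarrow> bool" where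
  "padic_tendsto p S L \<longleftrightarrow>
     (\<forall>k::nat. \<exists>N0. \<forall>N\<ge>N0. p_integral p ((S N - L) / of_nat p ^ k))"

end

theory Submission
  imports Defs "Jordan_Normal_Form.Char_Poly" "HOL-Number_Theory.Residues"
begin


lemma int_poly_root_of_unity_integral:
  fixes \<zeta> :: complex and Q :: "int poly" and m :: nat
  assumes m: "m > 0" and z: "\<zeta> ^ m = 1"
  shows "\<exists>P :: int poly. lead_coeff P = 1 \<and> poly (map_poly of_int P) (poly (map_poly of_int Q) \<zeta>) = 0"
proof -
  define y where "y = poly (map_poly of_int Q) \<zeta>"
  define A :: "int mat" where "A = mat m m (\<lambda>(k,l). \<Sum>i\<le>degree Q. (if (i+k) mod m = l then Polynomial.coeff Q i else 0))"
  define Ac :: "complex mat" where "Ac = map_mat of_int A"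
  define v :: "complex vec" where "v = vec m (\<lambda>k. \<zeta> ^ k)"
  have A: "A \<in> carrier_mat m m" unfolding A_def by simp
  have Ac: "Ac \<in> carrier_mat m m" unfolding Ac_def using A by simp
  have zmod: "\<zeta> ^ j = \<zeta> ^ (j mod m)" for j
  proof -
    have "\<zeta> ^ j = \<zeta> ^ (m * (j div m) + j mod m)" by (metis div_mult_mod_eq mult.commute)
    also have "\<dots> = \<zeta> ^ (j mod m)" by (simp only: power_add power_mult z power_one mult_1)
    finally show ?thesis .
  qed
  have y: "y = (\<Sum>i\<le>degree Q. of_int (Polynomial.coeff Q i) * \<zeta> ^ i)"
    unfolding y_def by (simp add: poly_altdef)
  have "Ac *\<^sub>v v = y \<cdot>\<^sub>v v"
  proof (rule eq_vecI)
    fix k assume "k < dim_vec (y \<cdot>\<^sub>v v)"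
    hence k: "k < m" by (simp add: v_def)
    have "(Ac *\<^sub>v v) $ k = (\<Sum>l<m. Ac $$ (k,l) * \<zeta> ^ l)"
      using k Ac by (simp add: v_def mult_mat_vec_def scalar_prod_def row_def lessThan_atLeast0)
    also have "\<dots> = (\<Sum>l<m. \<Sum>i\<le>degree Q. (if (i+k) mod m = l then of_int (Polynomial.coeff Q i) * \<zeta> ^ l else 0))"
      using k by (simp add: Ac_def A_def sum_distrib_right of_int_sum; intro sum.cong refl; simp)
    also have "\<dots> = (\<Sum>i\<le>degree Q. \<Sum>l<m. (if (i+k) mod m = l then of_int (Polynomial.coeff Q i) * \<zeta> ^ l else 0))"
      by (rule sum.swap)
    also have "\<dots> = (\<Sum>i\<le>degree Q. of_int (Polynomial.coeff Q i) * \<zeta> ^ ((i + k) mod m))"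
      using m by (simp add: sum.delta)
    also have "\<dots> = (\<Sum>i\<le>degree Q. of_int (Polynomial.coeff Q i) * \<zeta> ^ i) * \<zeta> ^ k"
      by (simp add: sum_distrib_right zmod[symmetric] power_add mult.assoc)
    also have "\<dots> = (y \<cdot>\<^sub>v v) $ k" using k by (simp add: y v_def)
    finally show "(Ac *\<^sub>v v) $ k = (y \<cdot>\<^sub>v v) $ k" .
  qed (simp add: v_def Ac_def A_def)
  moreover have "v \<noteq> 0\<^sub>v m"
  proof
    assume "v = 0\<^sub>v m"
    hence "v $ 0 = 0" using m by simp
    thus False using m by (simp add: v_def)
  qed
  ultimately have "eigenvector Ac v y" unfolding eigenvector_def using Ac by (simp add: v_def)
  hence "eigenvalue Ac y" unfolding eigenvalue_def by blast
  hence "poly (char_poly Ac) y = 0" using eigenvalue_root_char_poly[OF Ac] by simp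
  hence "poly (map_poly of_int (char_poly A)) y = 0"
    unfolding Ac_def of_int_hom.char_poly_hom[OF A] .
  moreover have "lead_coeff (char_poly A) = 1" using degree_monic_char_poly[OF A] by simp
  ultimately show ?thesis unfolding y_def by blast
qed


lemma denom_coprime:
  fixes r :: rat and b c :: int and p :: nat
  assumes "r * of_int b = of_int c" "b > 0" "coprime b (int p)"
  shows "coprime (snd (quotient_of r)) (int p)"
proof -
  obtain n d where nd: "quotient_of r = (n, d)" by (cases "quotient_of r")
  have r: "r = of_int n / of_int d" using quotient_of_div[OF nd] .
  have d: "d > 0" using quotient_of_denom_pos[OF nd] .
  have cop: "coprime n d" using quotient_of_coprime[OF nd] .
  have "of_int n * of_int b = (of_int (c * d) :: rat)" using assms(1) d unfolding r
    by (simp add: field_simps)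
  hence "n * b = c * d" by (metis of_int_eq_iff of_int_mult)
  hence "d dvd n * b" by (metis dvd_triv_right)
  hence "d dvd b" using cop by (metis coprime_commute coprime_dvd_mult_right_iff)
  hence "coprime d (int p)" using assms(3) by (metis coprime_divisors dvd_refl)
  thus ?thesis using nd by simp
qed

definition inR :: "nat \<Rightarrow> complex \<Rightarrow> complex \<Rightarrow> bool" where
  "inR p \<zeta> x \<longleftrightarrow> (\<exists>(Q::int poly) (D::nat). D > 0 \<and> coprime D p \<and>
      x = poly (map_poly of_int Q) \<zeta> / of_nat D)"

lemma inR_integral:
  assumes m: "m > 0" and z: "\<zeta> ^ m = 1" and x: "inR p \<zeta> x"
  shows "p_integral p x"
proof -
  obtain Q D where D: "D > 0" "coprime D p" and xq: "x = poly (map_poly of_int Q) \<zeta> / of_nat D"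
    using x unfolding inR_def by blast
  define y where "y = poly (map_poly of_int Q) \<zeta>"
  obtain P :: "int poly" where P: "lead_coeff P = 1" "poly (map_poly of_int P) y = 0"
    using int_poly_root_of_unity_integral[OF m z] unfolding y_def by blast
  define d where "d = degree P"
  define c :: "nat \<Rightarrow> rat" where "c = (\<lambda>i. of_int (Polynomial.coeff P i) * of_nat D ^ i / of_nat D ^ d)"
  define P' :: "complex poly" where "P' = (\<Sum>i\<le>d. Polynomial.monom (of_rat (c i)) i)"
  have yx: "y = of_nat D * x" using xq D unfolding y_def by simp
  have coeffP': "Polynomial.coeff P' j = (if j \<le> d then of_rat (c j) else 0)" for j
    unfolding P'_def by (simp add: coeff_sum)
  have "poly P' x = (\<Sum>i\<le>d. of_rat (c i) * x ^ i)"
    unfolding P'_def by (simp add: poly_sum poly_monom)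
  also have "\<dots> = (\<Sum>i\<le>d. of_int (Polynomial.coeff P i) * y ^ i) / of_nat D ^ d"
    unfolding c_def yx by (simp add: sum_divide_distrib power_mult_distrib of_rat_divide of_rat_mult
      of_rat_power mult_ac)
  also have "(\<Sum>i\<le>d. of_int (Polynomial.coeff P i) * y ^ i) = poly (map_poly of_int P) y"
    by (simp add: poly_altdef d_def)
  finally have root: "poly P' x = 0" using P by simp
  have degle: "degree P' \<le> d" unfolding P'_def
    by (rule degree_sum_le) (auto intro: order.trans[OF degree_monom_le])
  have cd: "Polynomial.coeff P' d = 1" using coeffP'[of d] P D unfolding c_def d_def by simp
  hence "degree P' = d" using degle by (metis le_degree one_neq_zero order.antisym)
  hence lc: "lead_coeff P' = 1" using cd by simp
  have rat: "\<exists>r::rat. Polynomial.coeff P' i = of_rat r \<and> coprime (snd (quotient_of r)) (int p)" for i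
  proof (cases "i \<le> d")
    case True
    have "c i * of_int (int D ^ d) = of_int (Polynomial.coeff P i * int D ^ i)"
      using D unfolding c_def by (simp add: field_simps)
    moreover have "coprime (int D ^ d) (int p)" using D by simp
    ultimately have "coprime (snd (quotient_of (c i))) (int p)"
      using D by (intro denom_coprime[of _ "int D ^ d" "Polynomial.coeff P i * int D ^ i"]) auto
    thus ?thesis using True coeffP'[of i] by auto
  next
    case False
    thus ?thesis using coeffP'[of i] by (intro exI[of _ 0]) auto
  qed
  show ?thesis unfolding p_integral_def using lc root rat by blast
qed



lemma inR_add: assumes "inR p \<zeta> x" "inR p \<zeta> y" shows "inR p \<zeta> (x + y)"
proof -
  obtain Q1 D1 where 1: "D1 > 0" "coprime D1 p" "x = poly (map_poly of_int Q1) \<zeta> / of_nat D1"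
    using assms(1) unfolding inR_def by blast
  obtain Q2 D2 where 2: "D2 > 0" "coprime D2 p" "y = poly (map_poly of_int Q2) \<zeta> / of_nat D2"
    using assms(2) unfolding inR_def by blast
  have "x + y = poly (map_poly of_int (Polynomial.smult (int D2) Q1 + Polynomial.smult (int D1) Q2)) \<zeta> / of_nat (D1 * D2)"
    using 1 2 by (simp add: hom_distribs field_simps)
  thus ?thesis unfolding inR_def using 1 2 by (intro exI[of _ "Polynomial.smult (int D2) Q1 + Polynomial.smult (int D1) Q2"] exI[of _ "D1*D2"]) auto
qed

lemma inR_mult: assumes "inR p \<zeta> x" "inR p \<zeta> y" shows "inR p \<zeta> (x * y)"
proof -
  obtain Q1 D1 where 1: "D1 > 0" "coprime D1 p" "x = poly (map_poly of_int Q1) \<zeta> / of_nat D1"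
    using assms(1) unfolding inR_def by blast
  obtain Q2 D2 where 2: "D2 > 0" "coprime D2 p" "y = poly (map_poly of_int Q2) \<zeta> / of_nat D2"
    using assms(2) unfolding inR_def by blast
  have "x * y = poly (map_poly of_int (Q1 * Q2)) \<zeta> / of_nat (D1 * D2)"
    using 1 2 by (simp add: hom_distribs field_simps)
  thus ?thesis unfolding inR_def using 1 2 by (intro exI[of _ "Q1 * Q2"] exI[of _ "D1*D2"]) auto
qed

lemma inR_of_int: "inR p \<zeta> (of_int c)"
  unfolding inR_def by (intro exI[of _ "[:c:]"] exI[of _ 1]) (cases "c = 0"; simp add: map_poly_pCons)

lemma inR_of_nat: "inR p \<zeta> (of_nat c)"
  using inR_of_int[of p \<zeta> "int c"] by simp

lemma inR_zeta_pow: "inR p \<zeta> (\<zeta> ^ e)"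
  unfolding inR_def by (intro exI[of _ "Polynomial.monom 1 e"] exI[of _ 1]) (auto simp: poly_monom)

lemma inR_half: assumes "odd p" "inR p \<zeta> x" shows "inR p \<zeta> (x / 2)"
proof -
  obtain Q D where 1: "D > 0" "coprime D p" "x = poly (map_poly of_int Q) \<zeta> / of_nat D"
    using assms(2) unfolding inR_def by blast
  have "coprime (2 * D) p" using 1 assms(1) by (simp add: coprime_commute[of 2] )
  moreover have "x / 2 = poly (map_poly of_int Q) \<zeta> / of_nat (2 * D)" using 1 by simp
  ultimately show ?thesis unfolding inR_def using 1 by (intro exI[of _ Q] exI[of _ "2*D"]) auto
qed

lemma inR_minus: assumes "inR p \<zeta> x" shows "inR p \<zeta> (- x)"
  using inR_mult[OF inR_of_int[of p \<zeta> "-1"] assms] by simp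

lemma inR_diff: assumes "inR p \<zeta> x" "inR p \<zeta> y" shows "inR p \<zeta> (x - y)"
  using inR_add[OF assms(1) inR_minus[OF assms(2)]] by simp

lemma inR_sum: assumes "\<And>i. i \<in> A \<Longrightarrow> inR p \<zeta> (g i)" shows "inR p \<zeta> (\<Sum>i\<in>A. g i)"
  using assms
proof (induction A rule: infinite_finite_induct)
  case (infinite A) thus ?case using inR_of_int[of p \<zeta> 0] by simp
next
  case empty thus ?case using inR_of_int[of p \<zeta> 0] by simp
next
  case (insert a A) thus ?case by (simp add: inR_add)
qed

lemma chi_mod: assumes "dirichlet_char f \<chi>" shows "\<chi> x = \<chi> (x mod f)"
proof -
  have per: "\<chi> (a + f) = \<chi> a" for a using assms unfolding dirichlet_char_def by blast
  have "\<chi> (b + f * k) = \<chi> b" for b k by (induction k) (simp_all, metis per add.assoc add.commute)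
  from this[of "x mod f" "x div f"] show ?thesis by (simp add: add.commute)
qed

lemma chi_pow: assumes "dirichlet_char f \<chi>" shows "\<chi> (x ^ k) = \<chi> x ^ k"
proof -
  have mult: "\<chi> (a * b) = \<chi> a * \<chi> b" "\<chi> 1 = 1" for a b using assms unfolding dirichlet_char_def by blast+
  have one: "\<chi> (Suc 0) = 1" using mult by simp
  show ?thesis by (induction k) (simp_all add: mult one)
qed

lemma chi_root: assumes "dirichlet_char f \<chi>" "coprime x f"
  shows "\<chi> x ^ totient f = 1"
proof -
  have "[x ^ totient f = 1] (mod f)" using euler_theorem[OF assms(2)] .
  hence "(x ^ totient f) mod f = 1 mod f" unfolding cong_def .
  hence "\<chi> (x ^ totient f) = \<chi> 1" using chi_mod[OF assms(1)] by metis
  thus ?thesis using chi_pow[OF assms(1)] assms(1) unfolding dirichlet_char_def by simp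
qed

lemma root_unity_pow:
  assumes "m > 0" "(z::complex) ^ m = 1"
  shows "\<exists>e. z = cis (2 * pi / real m) ^ e"
proof -
  have "z \<in> {z. z ^ m = 1}" using assms by simp
  then obtain k where "z = cis (2 * pi * real k / real m)"
    using bij_betw_roots_unity[OF assms(1)] unfolding bij_betw_def by auto
  thus ?thesis by (intro exI[of _ k]) (simp add: DeMoivre mult.commute)
qed

lemma chi_inR: assumes "dirichlet_char f \<chi>"
  shows "inR p (cis (2 * pi / real (totient f))) (\<chi> x)"
proof (cases "coprime x f")
  case True
  have f: "f > 0" using assms unfolding dirichlet_char_def by blast
  hence "totient f > 0" by simp
  from root_unity_pow[OF this chi_root[OF assms True]] obtain e where
    "\<chi> x = cis (2 * pi / real (totient f)) ^ e" by blast
  thus ?thesis using inR_zeta_pow by simp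
next
  case False
  hence "\<chi> x = 0" using assms unfolding dirichlet_char_def by blast
  thus ?thesis using inR_of_int[of _ _ 0] by simp
qed



definition cc :: "(nat \<Rightarrow> complex) \<Rightarrow> nat \<Rightarrow> complex" where
  "cc \<chi> a = (-1) ^ a * \<chi> a"

definition AA :: "(nat \<Rightarrow> complex) \<Rightarrow> nat \<Rightarrow> complex fps" where
  "AA \<chi> M = (\<Sum>a=1..M. fps_const (cc \<chi> a) * fps_exp (of_nat a))"

lemma chi_per: assumes "dirichlet_char f \<chi>" shows "\<chi> (b + f * k) = \<chi> b"
  using chi_mod[OF assms, of "b + f * k"] chi_mod[OF assms, of b] by simp

lemma AA_blocks:
  assumes "dirichlet_char f \<chi>" "odd f"
  shows "AA \<chi> (f * m) = (\<Sum>j<m. (- fps_exp (of_nat f)) ^ j) * AA \<chi> f"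
proof (induction m)
  case 0 thus ?case by (simp add: AA_def)
next
  case (Suc m)
  have "AA \<chi> (f * Suc m) = AA \<chi> (f * m) + (\<Sum>a=1+f*m..f+f*m. fps_const (cc \<chi> a) * fps_exp (of_nat a))"
  proof -
    have e: "f * Suc m = f*m + f" by simp
    have i: "{f*m+1..f*m+f} = {1+f*m..f+f*m}" by (simp add: add.commute)
    show ?thesis unfolding AA_def e
      by (subst sum.ub_add_nat[of 1 "f*m"]) (simp, simp only: i)
  qed
  also have "(\<Sum>a=1+f*m..f+f*m. fps_const (cc \<chi> a) * fps_exp (of_nat a)) =
      (\<Sum>b=1..f. fps_const (cc \<chi> (b + f*m)) * fps_exp (of_nat (b + f*m)))"
    by (rule sum.shift_bounds_cl_nat_ivl)
  also have "\<dots> = (\<Sum>b=1..f. (- fps_exp (of_nat f)) ^ m * (fps_const (cc \<chi> b) * fps_exp (of_nat b)))"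
  proof (rule sum.cong[OF refl])
    fix b
    have "cc \<chi> (b + f*m) = (-1)^m * cc \<chi> b"
      using chi_per[OF assms(1)] assms(2) by (simp add: cc_def power_add power_mult_distrib power_mult
         power_minus_odd)
    moreover have "fps_exp (of_nat (b + f*m) :: complex) = fps_exp (of_nat b) * fps_exp (of_nat f) ^ m"
      by (simp add: fps_exp_add_mult fps_exp_power_mult mult.commute)
    ultimately show "fps_const (cc \<chi> (b + f*m)) * fps_exp (of_nat (b + f*m)) =
       (- fps_exp (of_nat f)) ^ m * (fps_const (cc \<chi> b) * fps_exp (of_nat b))"
      by (simp add: power_minus' fps_const_mult[symmetric] fps_const_power[symmetric] fps_const_neg[symmetric] mult_ac)
  qed
  also have "\<dots> = (- fps_exp (of_nat f)) ^ m * AA \<chi> f" unfolding AA_def by (simp add: sum_distrib_left)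
  finally show ?case using Suc by (simp add: algebra_simps)
qed


lemma AA_dist:
  assumes "dirichlet_char f \<chi>" "odd f" "odd m"
  shows "AA \<chi> (f * m) * (fps_exp (of_nat f) + 1) = AA \<chi> f * (fps_exp (of_nat (f * m)) + 1)"
proof -
  define y :: "complex fps" where "y = - fps_exp (of_nat f)"
  have "(\<Sum>j<m. y ^ j) * (fps_exp (of_nat f) + 1) = (1 - y) * (\<Sum>j<m. y ^ j)"
    by (simp add: y_def algebra_simps)
  also have "\<dots> = 1 - y ^ m" by (rule one_diff_power_eq[symmetric])
  also have "y ^ m = - fps_exp (of_nat (f * m))"
    using assms(3) by (simp add: y_def power_minus_odd fps_exp_power_mult mult.commute)
  finally have "(\<Sum>j<m. y ^ j) * (fps_exp (of_nat f) + 1) = fps_exp (of_nat (f * m)) + 1" by simp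
  thus ?thesis unfolding AA_blocks[OF assms(1,2)] y_def[symmetric]
    by (metis mult.assoc mult.commute)
qed

lemma G_eq:
  assumes "dirichlet_char f \<chi>" "odd f" "odd m"
  shows "(2 * AA \<chi> f / (fps_exp (of_nat f) + 1)) * (fps_exp (of_nat (f * m)) + 1) = 2 * AA \<chi> (f * m)"
proof -
  define U :: "complex fps" where "U = fps_exp (of_nat f) + 1"
  have U0: "U $ 0 = 2" unfolding U_def by simp
  hence Unz: "U \<noteq> 0" by auto
  have GU: "(2 * AA \<chi> f / U) * U = 2 * AA \<chi> f"
    using U0 by (simp add: fps_divide_unit mult.assoc inverse_mult_eq_1)
  have "((2 * AA \<chi> f / U) * (fps_exp (of_nat (f * m)) + 1)) * U = 2 * AA \<chi> f * (fps_exp (of_nat (f * m)) + 1)"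
    using GU by (metis mult.assoc mult.commute)
  also have "\<dots> = (2 * AA \<chi> (f * m)) * U"
    using AA_dist[OF assms] unfolding U_def by (simp add: mult.assoc)
  finally show ?thesis using Unz unfolding U_def by simp
qed

lemma key_rec:
  assumes "dirichlet_char f \<chi>" "odd f" "odd m"
  shows "2 * gen_euler f \<chi> n + (\<Sum>i<n. of_nat (n choose i) * of_nat (f * m) ^ (n - i) * gen_euler f \<chi> i)
          = 2 * (\<Sum>a=1..f * m. (-1) ^ a * \<chi> a * of_nat a ^ n)"
proof -
  define G where "G = 2 * AA \<chi> f / (fps_exp (of_nat f) + 1)"
  define F where "F = f * m"
  have g: "gen_euler f \<chi> k = fact k * G $ k" for k
    unfolding gen_euler_def G_def AA_def cc_def by simp
  have eq: "G * (fps_exp (of_nat F) + 1) = 2 * AA \<chi> F" unfolding G_def F_def using G_eq[OF assms] .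
  have "fact n * (G * (fps_exp (of_nat F) + 1)) $ n = fact n * (2 * AA \<chi> F) $ n" using eq by simp
  moreover have "fact n * (G * (fps_exp (of_nat F) + 1)) $ n =
     (\<Sum>i=0..n. of_nat (n choose i) * of_nat F ^ (n - i) * gen_euler f \<chi> i) + gen_euler f \<chi> n"
  proof -
    have "fact n * (G * (fps_exp (of_nat F) + 1)) $ n = fact n * (G * fps_exp (of_nat F)) $ n + fact n * G $ n"
      by (simp add: distrib_left)
    also have "fact n * (G * fps_exp (of_nat F)) $ n = (\<Sum>i=0..n. fact n * (G $ i * of_nat F ^ (n - i) / fact (n - i)))"
      by (simp add: fps_mult_nth sum_distrib_left)
    also have "\<dots> = (\<Sum>i=0..n. of_nat (n choose i) * of_nat F ^ (n - i) * gen_euler f \<chi> i)"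
    proof (rule sum.cong[OF refl])
      fix i assume "i \<in> {0..n}"
      hence i: "i \<le> n" by simp
      have "(of_nat (n choose i) :: complex) = fact n / (fact i * fact (n - i))"
        using binomial_fact[OF i] by simp
      thus "fact n * (G $ i * of_nat F ^ (n - i) / fact (n - i)) = of_nat (n choose i) * of_nat F ^ (n - i) * gen_euler f \<chi> i"
        unfolding g by (simp add: field_simps)
    qed
    finally show ?thesis using g by simp
  qed
  moreover have "fact n * (2 * AA \<chi> F) $ n = 2 * (\<Sum>a=1..F. (-1) ^ a * \<chi> a * of_nat a ^ n)"
  proof -
    have "2 * AA \<chi> F = (\<Sum>a=1..F. fps_const (2 * cc \<chi> a) * fps_exp (of_nat a))"
      unfolding AA_def by (simp add: sum_distrib_left numeral_fps_const mult.assoc[symmetric])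
    hence "fact n * (2 * AA \<chi> F) $ n = (\<Sum>a=1..F. fact n * (2 * cc \<chi> a * (of_nat a ^ n / fact n)))"
      by (simp add: fps_sum_nth sum_distrib_left)
    also have "\<dots> = 2 * (\<Sum>a=1..F. (-1) ^ a * \<chi> a * of_nat a ^ n)"
      by (simp add: sum_distrib_left cc_def mult.assoc)
    finally show ?thesis .
  qed
  ultimately have "(\<Sum>i=0..n. of_nat (n choose i) * of_nat F ^ (n - i) * gen_euler f \<chi> i) + gen_euler f \<chi> n
     = 2 * (\<Sum>a=1..F. (-1) ^ a * \<chi> a * of_nat a ^ n)" by simp
  moreover have "(\<Sum>i=0..n. of_nat (n choose i) * of_nat F ^ (n - i) * gen_euler f \<chi> i) =
     (\<Sum>i<n. of_nat (n choose i) * of_nat F ^ (n - i) * gen_euler f \<chi> i) + gen_euler f \<chi> n"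
    by (simp add: atLeast0AtMost lessThan_Suc_atMost[symmetric])
  ultimately show ?thesis unfolding F_def by (simp add: algebra_simps)
qed



lemma inR_pow: "inR p \<zeta> x \<Longrightarrow> inR p \<zeta> (x ^ k)"
  by (induction k) (simp_all add: inR_mult inR_of_nat[of p \<zeta> 1, simplified])

theorem lemma2p1:
  fixes p f n :: nat and \<chi> :: "nat \<Rightarrow> complex"
  assumes "prime p" and "odd p"
    and "primitive_dirichlet_char f \<chi>" and "odd f"
  shows "padic_tendsto p
           (\<lambda>N. \<Sum>a=1..f * p ^ N. (-1) ^ a * \<chi> a * of_nat a ^ n)
           (gen_euler f \<chi> n)"
proof -
  have dc: "dirichlet_char f \<chi>" using assms(3) unfolding primitive_dirichlet_char_def by blast
  have f0: "f > 0" using dc unfolding dirichlet_char_def by blast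
  define m0 where "m0 = totient f"
  define \<zeta> where "\<zeta> = cis (2 * pi / real m0)"
  have m0: "m0 > 0" using f0 unfolding m0_def by simp
  have z: "\<zeta> ^ m0 = 1" using m0 unfolding \<zeta>_def by (simp add: DeMoivre)
  have chiR: "inR p \<zeta> (\<chi> a)" for a using chi_inR[OF dc] unfolding \<zeta>_def m0_def .
  define S where "S = (\<lambda>N n. \<Sum>a=1..f * p ^ N. (-1) ^ a * \<chi> a * (of_nat a ^ n :: complex))"
  have trm: "inR p \<zeta> ((-1) ^ a * \<chi> a * (of_nat a ^ k :: complex))" for a k
  proof -
    have "(-1) ^ a * \<chi> a * (of_nat a ^ k :: complex) = of_int ((-1) ^ a) * \<chi> a * of_nat (a ^ k)" by simp
    thus ?thesis using inR_mult[OF inR_mult[OF inR_of_int chiR] inR_of_nat] by metis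
  qed
  have SR: "inR p \<zeta> (S N k)" for N k unfolding S_def
    by (intro inR_sum trm)
  have oddpN: "odd (p ^ N)" for N using assms(2) by simp
  have rec: "2 * gen_euler f \<chi> k + (\<Sum>i<k. of_nat (k choose i) * of_nat (f * p ^ N) ^ (k - i) * gen_euler f \<chi> i)
          = 2 * S N k" for N k
    unfolding S_def using key_rec[OF dc assms(4) oddpN] .
  have gR: "inR p \<zeta> (gen_euler f \<chi> k)" for k
  proof (induction k rule: less_induct)
    case (less k)
    have "gen_euler f \<chi> k = (2 * S 0 k - (\<Sum>i<k. of_nat (k choose i) * of_nat (f * p ^ 0) ^ (k - i) * gen_euler f \<chi> i)) / 2"
      using rec[of k 0] by (simp add: field_simps)
    moreover have "inR p \<zeta> ((2 * S 0 k - (\<Sum>i<k. of_nat (k choose i) * of_nat (f * p ^ 0) ^ (k - i) * gen_euler f \<chi> i)) / 2)"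
      by (intro inR_half[OF assms(2)] inR_diff inR_mult inR_of_nat SR inR_sum less)
        (auto intro!: inR_pow inR_of_nat simp: inR_of_nat[of p \<zeta> 2, simplified])
    ultimately show ?case by metis
  qed
  show ?thesis unfolding padic_tendsto_def
  proof (intro allI)
    fix k :: nat
    show "\<exists>N0. \<forall>N\<ge>N0. p_integral p (((\<Sum>a = 1..f * p ^ N. (- 1) ^ a * \<chi> a * of_nat a ^ n) - gen_euler f \<chi> n) / of_nat p ^ k)"
  proof (intro exI[of _ k] impI allI) 
    fix N :: nat assume Nk: "k \<le> N"
    define F where "F = f * p ^ N"
    define T where "T = (\<Sum>i<n. of_nat (n choose i) * of_nat (f * p ^ (N - k)) * of_nat F ^ (n - i - 1) * gen_euler f \<chi> i)"
    have TR: "inR p \<zeta> (T / 2)" unfolding T_def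
      by (intro inR_half[OF assms(2)] inR_mult inR_of_nat inR_sum gR inR_pow)
    have pk: "(of_nat p :: complex) ^ k \<noteq> 0" using assms(1) by (simp add: prime_gt_0_nat)
    have "(\<Sum>i<n. of_nat (n choose i) * of_nat F ^ (n - i) * gen_euler f \<chi> i) = of_nat p ^ k * T"
      unfolding T_def sum_distrib_left
    proof (rule sum.cong[OF refl])
      fix i assume "i \<in> {..<n}"
      hence ni: "n - i = Suc (n - i - 1)" by simp
      have Fe: "(of_nat F :: complex) = of_nat p ^ k * of_nat (f * p ^ (N - k))"
        unfolding F_def using Nk by (simp add: power_add[symmetric])
      show "of_nat (n choose i) * of_nat F ^ (n - i) * gen_euler f \<chi> i =
         of_nat p ^ k * (of_nat (n choose i) * of_nat (f * p ^ (N - k)) * of_nat F ^ (n - i - 1) * gen_euler f \<chi> i)"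
        by (subst ni, subst power_Suc, subst (1) Fe) (simp add: mult_ac)
    qed
    hence "2 * gen_euler f \<chi> n + of_nat p ^ k * T = 2 * S N n"
      using rec[of n N] unfolding F_def by simp
    hence "(S N n - gen_euler f \<chi> n) / of_nat p ^ k = T / 2"
      using pk by (simp add: field_simps)
    hence "p_integral p ((S N n - gen_euler f \<chi> n) / of_nat p ^ k)"
      using inR_integral[OF m0 z TR] by metis
    thus "p_integral p (((\<Sum>a = 1..f * p ^ N. (- 1) ^ a * \<chi> a * of_nat a ^ n) - gen_euler f \<chi> n) / of_nat p ^ k)"
      unfolding S_def .
  qed
  qed
qed


end
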